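(* For any $q=\Omega(1)$, any $\epsilon>0$, and any two parties $u$, $v$ holding input vectors $\mathbf{x}_u,\mathbf{x}_v\in\mathbb{R}^d$ respectively, there is a (randomized) quantization method in which $u$ sends $O(d\log q)$ bits to $v$, and if $\|\mathbf{x}_u-\mathbf{x}_v\|=O(q\epsilon)$, then $v$ can recover an unbiased estimate $\mathbf{z}$ of $\mathbf{x}_u$ (i.e. $\mathbb{E}[\mathbf{z}]=\mathbf{x}_u$) with $\|\mathbf{z}-\mathbf{x}_u\|=O(\epsilon)$.
   Context: $\|\cdot\|$ denotes a fixed one of the $\ell_1$, $\ell_2$ or $\ell_\infty$ norms on $\mathbb{R}^d$. Asymptotic notation hides absolute constants independent of $d,q,\epsilon$ and the inputs. Party $v$ uses its own vector $\mathbf{x}_v$ when decoding. *)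

theory Defs
  imports "HOL-Probability.Probability"
begin

text \<open>The fixed norm on R^d: one of l1, l2, l-infinity.
  Vectors in R^d are represented as functions nat => real; only the
  coordinates 0..d-1 are relevant.\<close>

datatype normkind = L1 | L2 | Linf

fun vnorm :: "normkind \<Rightarrow> nat \<Rightarrow> (nat \<Rightarrow> real) \<Rightarrow> real" where
  "vnorm L1 d x = (\<Sum>i<d. \<bar>x i\<bar>)"
| "vnorm L2 d x = sqrt (\<Sum>i<d. (x i)\<^sup>2)"
| "vnorm Linf d x = Max (insert 0 ((\<lambda>i. \<bar>x i\<bar>) ` {..<d}))"

definition vecs :: "nat \<Rightarrow> (nat \<Rightarrow> real) set" where
  "vecs d = {x. \<forall>i\<ge>d. x i = 0}"

end

theory Submission imports Defs begin

fun sc :: "normkind \<Rightarrow> nat \<Rightarrow> real" where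
  "sc L1 d = real d" | "sc L2 d = sqrt (real d)" | "sc Linf d = 1"

fun sa :: "normkind \<Rightarrow> nat \<Rightarrow> real" where
  "sa L1 d = 1" | "sa L2 d = sqrt (real d)" | "sa Linf d = real d"

lemma sa_sc: "sa nk d * sc nk d = real d"
  by (cases nk) auto

lemma sc_pos: "d > 0 \<Longrightarrow> sc nk d > 0"
  by (cases nk) auto

lemma Linf_ge: "i < d \<Longrightarrow> \<bar>x i\<bar> \<le> vnorm Linf d x"
  by (auto intro!: Max_ge)

lemma norm_L1_bound: "(\<Sum>i<d. \<bar>x i\<bar>) \<le> sa nk d * vnorm nk d x"
proof (cases nk)
  case L1 then show ?thesis by simp
next
  case L2
  have "(\<Sum>i<d. \<bar>x i\<bar>)\<^sup>2 \<le> (\<Sum>i<d. \<bar>x i\<bar>\<^sup>2) * card {..<d}"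
    by (rule sum_squared_le_sum_of_squares)
  hence "(\<Sum>i<d. \<bar>x i\<bar>)\<^sup>2 \<le> real d * (\<Sum>i<d. (x i)\<^sup>2)" by (simp add: mult.commute)
  hence "sqrt ((\<Sum>i<d. \<bar>x i\<bar>)\<^sup>2) \<le> sqrt (real d * (\<Sum>i<d. (x i)\<^sup>2))"
    using real_sqrt_le_mono by blast
  moreover have "sqrt ((\<Sum>i<d. \<bar>x i\<bar>)\<^sup>2) = (\<Sum>i<d. \<bar>x i\<bar>)"
    by (simp add: sum_nonneg)
  ultimately show ?thesis using L2 by (simp add: real_sqrt_mult)
next
  case Linf
  have "(\<Sum>i<d. \<bar>x i\<bar>) \<le> (\<Sum>i<d. vnorm Linf d x)"
    by (rule sum_mono) (simp add: Linf_ge)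
  then show ?thesis using Linf by simp
qed

lemma norm_small:
  assumes "h \<ge> 0" "\<And>i. i < d \<Longrightarrow> \<bar>x i\<bar> \<le> h"
  shows "vnorm nk d x \<le> sc nk d * h"
proof (cases nk)
  case L1
  have "(\<Sum>i<d. \<bar>x i\<bar>) \<le> (\<Sum>i<d. h)" by (rule sum_mono) (simp add: assms)
  then show ?thesis using L1 by simp
next
  case L2
  have "(\<Sum>i<d. (x i)\<^sup>2) \<le> (\<Sum>i<d. h\<^sup>2)"
  proof (rule sum_mono)
    fix i assume "i \<in> {..<d}"
    hence "\<bar>x i\<bar> \<le> \<bar>h\<bar>" using assms by simp
    thus "(x i)\<^sup>2 \<le> h\<^sup>2" by (rule abs_le_square_iff[THEN iffD1])
  qed
  hence "sqrt (\<Sum>i<d. (x i)\<^sup>2) \<le> sqrt (real d * h\<^sup>2)" by simp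
  then show ?thesis using L2 assms(1) by (simp add: real_sqrt_mult)
next
  case Linf
  then show ?thesis using assms by (auto intro!: Max.boundedI)
qed

lemma greedy_color:
  assumes "finite V" "finite C"
    and sym: "\<And>a b. E a b \<Longrightarrow> E b a" and irr: "\<And>a. \<not> E a a"
    and deg: "\<And>a. a \<in> V \<Longrightarrow> card {b\<in>V. E a b} < card C"
  shows "\<exists>f. (\<forall>a\<in>V. f a \<in> C) \<and> (\<forall>a\<in>V. \<forall>b\<in>V. E a b \<longrightarrow> f a \<noteq> f b)"
  using assms(1) deg
proof (induction V rule: finite_induct)
  case empty then show ?case by auto
next
  case (insert x F)
  have "\<And>a. a \<in> F \<Longrightarrow> card {b\<in>F. E a b} < card C"
  proof -
    fix a assume a: "a \<in> F"
    have "card {b\<in>F. E a b} \<le> card {b\<in>insert x F. E a b}"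
      by (rule card_mono) (use insert in auto)
    with insert.prems[of a] a show "card {b\<in>F. E a b} < card C" by auto
  qed
  with insert.IH obtain f where f: "\<forall>a\<in>F. f a \<in> C" "\<forall>a\<in>F. \<forall>b\<in>F. E a b \<longrightarrow> f a \<noteq> f b"
    by blast
  define N where "N = {b\<in>F. E x b}"
  have "card (f ` N) \<le> card N" using insert by (intro card_image_le) (auto simp: N_def)
  also have "card N \<le> card {b\<in>insert x F. E x b}"
    unfolding N_def by (rule card_mono) (use insert in auto)
  also have "\<dots> < card C" using insert.prems by auto
  finally have lt: "card (f ` N) < card C" .
  have "\<not> C \<subseteq> f ` N"
  proof
    assume "C \<subseteq> f ` N"
    moreover have "finite (f ` N)" using insert by (simp add: N_def)
    ultimately have "card C \<le> card (f ` N)" by (rule card_mono[rotated])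
    with lt show False by simp
  qed
  then obtain col where col: "col \<in> C" "col \<notin> f ` N" by auto
  define g where "g = f(x := col)"
  have "\<forall>a\<in>insert x F. g a \<in> C" using f col by (auto simp: g_def)
  moreover have "\<forall>a\<in>insert x F. \<forall>b\<in>insert x F. E a b \<longrightarrow> g a \<noteq> g b"
  proof (intro ballI impI)
    fix a b assume ab: "a \<in> insert x F" "b \<in> insert x F" "E a b"
    show "g a \<noteq> g b"
    proof (cases "a = x")
      case True
      then have "b \<noteq> x" using irr ab by auto
      then show ?thesis using True ab col insert.hyps by (auto simp: g_def N_def)
    next
      case False
      show ?thesis
      proof (cases "b = x")
        case True
        then have "E x a" using sym ab by auto
        then show ?thesis using True False ab col insert.hyps by (auto simp: g_def N_def)
      next
        case False
        then show ?thesis using \<open>a \<noteq> x\<close> ab f by (auto simp: g_def)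
      qed
    qed
  qed
  ultimately show ?case by blast
qed

definition Wset :: "nat \<Rightarrow> nat \<Rightarrow> (nat \<Rightarrow> int) set" where
  "Wset d D = {w \<in> PiE {..<d} (\<lambda>_. {-int D..int D}). (\<Sum>i<d. \<bar>w i\<bar>) \<le> int D}"

lemma finite_Wset: "finite (Wset d D)"
  unfolding Wset_def by (rule finite_subset[of _ "PiE {..<d} (\<lambda>_. {-int D..int D})"]) (auto intro!: finite_PiE)

lemma sym_sum_bound:
  fixes t :: real assumes t: "0 \<le> t" "t < 1"
  shows "(\<Sum>z\<in>{-int D..int D}. t ^ nat \<bar>z\<bar>) \<le> 2 / (1 - t)"
proof -
  have sub: "{-int D..int D} \<subseteq> int ` {..D} \<union> (\<lambda>k. - int k) ` {..D}"
  proof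
    fix z assume z: "z \<in> {-int D..int D}"
    show "z \<in> int ` {..D} \<union> (\<lambda>k. - int k) ` {..D}"
    proof (cases "z \<ge> 0")
      case True then have "z = int (nat z)" "nat z \<le> D" using z by auto
      then show ?thesis by blast
    next
      case False then have "z = - int (nat (-z))" "nat (-z) \<le> D" using z by auto
      then show ?thesis by blast
    qed
  qed
  have "(\<Sum>z\<in>{-int D..int D}. t ^ nat \<bar>z\<bar>) \<le> (\<Sum>z\<in>int ` {..D} \<union> (\<lambda>k. - int k) ` {..D}. t ^ nat \<bar>z\<bar>)"
    by (rule sum_mono2) (use sub t in auto)
  also have "\<dots> \<le> (\<Sum>z\<in>int ` {..D}. t ^ nat \<bar>z\<bar>) + (\<Sum>z\<in>(\<lambda>k. - int k) ` {..D}. t ^ nat \<bar>z\<bar>)"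
    by (subst sum_Un) (use t in \<open>auto intro!: sum_nonneg\<close>)
  also have "(\<Sum>z\<in>int ` {..D}. t ^ nat \<bar>z\<bar>) = (\<Sum>k\<le>D. t ^ k)"
    by (subst sum.reindex) (auto simp: inj_on_def)
  also have "(\<Sum>z\<in>(\<lambda>k. - int k) ` {..D}. t ^ nat \<bar>z\<bar>) = (\<Sum>k\<le>D. t ^ k)"
    by (subst sum.reindex) (auto simp: inj_on_def)
  also have "(\<Sum>k\<le>D. t ^ k) = (1 - t ^ Suc D) / (1 - t)"
  proof -
    have "(\<Sum>k\<le>D. t ^ k) = (\<Sum>k<Suc D. t ^ k)" by (simp only: lessThan_Suc_atMost)
    also have "\<dots> = (1 - t ^ Suc D) / (1 - t)" using t by (subst sum_gp_strict) auto
    finally show ?thesis .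
  qed
  also have "\<dots> \<le> 1 / (1 - t)"
    using t by (simp add: divide_right_mono)
  finally show ?thesis by simp
qed

lemma card_Wset:
  assumes a: "\<alpha> \<ge> 1"
  shows "real (card (Wset d (\<alpha> * d))) \<le> (2 * exp 1 * (real \<alpha> + 1)) ^ d"
proof -
  define D where "D = \<alpha> * d"
  define t :: real where "t = real \<alpha> / (real \<alpha> + 1)"
  have t0: "0 < t" and t1: "t < 1" using a by (auto simp: t_def)
  define B where "B = PiE {..<d} (\<lambda>_. {-int D..int D})"
  have finB: "finite B" unfolding B_def by (auto intro!: finite_PiE)
  have WB: "Wset d D \<subseteq> B" unfolding Wset_def B_def by auto
  have termb: "t ^ D \<le> (\<Prod>i<d. t ^ nat \<bar>w i\<bar>)" if w: "w \<in> Wset d D" for w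
  proof -
    have "int (\<Sum>i<d. nat \<bar>w i\<bar>) = (\<Sum>i<d. \<bar>w i\<bar>)" by (simp add: of_nat_sum)
    also have "\<dots> \<le> int D" using w by (simp add: Wset_def)
    finally have le: "(\<Sum>i<d. nat \<bar>w i\<bar>) \<le> D" by linarith
    have "t ^ D \<le> t ^ (\<Sum>i<d. nat \<bar>w i\<bar>)"
      by (rule power_decreasing[OF le]) (use t0 t1 in auto)
    also have "\<dots> = (\<Prod>i<d. t ^ nat \<bar>w i\<bar>)" by (rule power_sum)
    finally show ?thesis .
  qed
  have "real (card (Wset d D)) * t ^ D = (\<Sum>w\<in>Wset d D. t ^ D)" by simp
  also have "\<dots> \<le> (\<Sum>w\<in>Wset d D. \<Prod>i<d. t ^ nat \<bar>w i\<bar>)"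
    by (rule sum_mono) (rule termb)
  also have "\<dots> \<le> (\<Sum>w\<in>B. \<Prod>i<d. t ^ nat \<bar>w i\<bar>)"
    by (rule sum_mono2[OF finB WB]) (use t0 in \<open>auto intro!: prod_nonneg\<close>)
  also have "\<dots> = (\<Prod>i<d. \<Sum>z\<in>{-int D..int D}. t ^ nat \<bar>z\<bar>)"
    unfolding B_def by (rule prod_sum_PiE[symmetric]) auto
  also have "\<dots> \<le> (\<Prod>i<d. 2 / (1 - t))"
    by (rule prod_mono) (use t0 t1 sym_sum_bound in \<open>auto intro!: sum_nonneg\<close>)
  also have "\<dots> = (2 * (real \<alpha> + 1)) ^ d"
    by (simp add: t_def field_simps)
  finally have c1: "real (card (Wset d D)) * t ^ D \<le> (2 * (real \<alpha> + 1)) ^ d" .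
  have "(1 / t) ^ \<alpha> = (1 + 1 / real \<alpha>) ^ \<alpha>" using a by (simp add: t_def field_simps)
  also have "\<dots> \<le> exp (1 / real \<alpha>) ^ \<alpha>"
    by (rule power_mono) (auto simp: exp_ge_add_one_self)
  also have "\<dots> = exp 1" using a by (simp add: exp_of_nat_mult[symmetric])
  finally have e: "(1 / t) ^ \<alpha> \<le> exp 1" .
  have "(1 / t) ^ D = ((1 / t) ^ \<alpha>) ^ d" by (simp add: D_def power_mult)
  also have "\<dots> \<le> exp 1 ^ d" by (rule power_mono[OF e]) (use t0 in auto)
  finally have e2: "(1 / t) ^ D \<le> exp 1 ^ d" .
  have "real (card (Wset d D)) = real (card (Wset d D)) * t ^ D * (1 / t) ^ D"
    using t0 by (simp add: power_one_over field_simps)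
  also have "\<dots> \<le> (2 * (real \<alpha> + 1)) ^ d * exp 1 ^ d"
    by (rule mult_mono[OF c1 e2]) (use t0 in auto)
  also have "\<dots> = (2 * exp 1 * (real \<alpha> + 1)) ^ d" by (simp add: power_mult_distrib[symmetric] mult_ac)
  finally show ?thesis unfolding D_def .
qed


lemma lattice_color:
  fixes D d :: nat and C :: "'c set"
  assumes finC: "finite C" and cardC: "card (Wset d D) < card C"
  shows "\<exists>col. (\<forall>y. col y \<in> C) \<and>
     (\<forall>y y'. (\<forall>i\<ge>d. y i = 0) \<longrightarrow> (\<forall>i\<ge>d. y' i = 0) \<longrightarrow> y \<noteq> y' \<longrightarrow>
        (\<Sum>i<d. \<bar>y i - y' i\<bar>) \<le> int D \<longrightarrow> col y \<noteq> col y')"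
proof -
  define P :: int where "P = 2 * int D + 1"
  have P0: "P > 0" by (simp add: P_def)
  define T where "T = PiE_dflt {..<d} (0::int) (\<lambda>_. {0..<P})"
  define red :: "(nat \<Rightarrow> int) \<Rightarrow> (nat \<Rightarrow> int)" where
    "red y = (\<lambda>i. if i < d then y i mod P else 0)" for y
  have redT: "red y \<in> T" for y using P0 by (auto simp: T_def PiE_dflt_def red_def)
  define E where "E a b = (a \<in> T \<and> b \<in> T \<and> a \<noteq> b \<and> (\<exists>w\<in>Wset d D. red (\<lambda>i. a i + w i) = b))" for a b
  have finT: "finite T" unfolding T_def by (rule finite_PiE_dflt) auto
  have symE: "E b a" if "E a b" for a b
  proof -
    from that obtain w where a: "a \<in> T" and b: "b \<in> T" "a \<noteq> b" and w: "w \<in> Wset d D"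
      and bw: "red (\<lambda>i. a i + w i) = b" by (auto simp: E_def)
    define w' where "w' = restrict (\<lambda>i. - w i) {..<d}"
    have "(\<Sum>i<d. \<bar>w' i\<bar>) = (\<Sum>i<d. \<bar>w i\<bar>)" by (rule sum.cong) (auto simp: w'_def)
    hence "w' \<in> Wset d D" using w apply (auto simp: Wset_def w'_def PiE_iff)
      by (metis lessThan_iff minus_le_iff)
    moreover have "red (\<lambda>i. b i + w' i) = a"
    proof
      fix i show "red (\<lambda>i. b i + w' i) i = a i"
      proof (cases "i < d")
        case True
        have "red (\<lambda>i. b i + w' i) i = (b i + - w i) mod P"
          using True by (simp add: red_def w'_def)
        also have "\<dots> = ((a i + w i) mod P + - w i) mod P" using True bw[symmetric] by (simp add: red_def)
        also have "\<dots> = a i mod P" by (simp add: mod_diff_left_eq)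
        also have "\<dots> = a i" using a True by (auto simp: T_def PiE_dflt_def)
        finally show ?thesis .
      next
        case False then show ?thesis using a by (auto simp: red_def T_def PiE_dflt_def)
      qed
    qed
    ultimately show ?thesis using a b by (auto simp: E_def)
  qed
  have irrE: "\<not> E a a" for a by (simp add: E_def)
  have degE: "card {b\<in>T. E a b} < card C" if "a \<in> T" for a
  proof -
    have "{b\<in>T. E a b} \<subseteq> (\<lambda>w. red (\<lambda>i. a i + w i)) ` Wset d D" by (auto simp: E_def)
    hence "card {b\<in>T. E a b} \<le> card ((\<lambda>w. red (\<lambda>i. a i + w i)) ` Wset d D)"
      by (intro card_mono) (auto intro: finite_Wset)
    also have "\<dots> \<le> card (Wset d D)" by (rule card_image_le[OF finite_Wset])
    finally show ?thesis using cardC by simp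
  qed
  obtain f where f: "\<forall>a\<in>T. f a \<in> C" "\<forall>a\<in>T. \<forall>b\<in>T. E a b \<longrightarrow> f a \<noteq> f b"
    using greedy_color[OF finT finC symE irrE degE] by blast
  define col where "col y = f (red y)" for y
  have "\<forall>y. col y \<in> C" using f redT by (simp add: col_def)
  moreover have "col y \<noteq> col y'"
    if y: "\<forall>i\<ge>d. y i = 0" and y': "\<forall>i\<ge>d. y' i = 0" and ne: "y \<noteq> y'"
      and s: "(\<Sum>i<d. \<bar>y i - y' i\<bar>) \<le> int D" for y y'
  proof -
    have bnd: "\<bar>y i - y' i\<bar> \<le> int D" if "i < d" for i
    proof -
      have "\<bar>y i - y' i\<bar> \<le> (\<Sum>i<d. \<bar>y i - y' i\<bar>)"
        by (rule member_le_sum) (use that in auto)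
      with s show ?thesis by simp
    qed
    obtain i where i: "y i \<noteq> y' i" using ne by auto
    with y y' have id: "i < d" by (metis not_le)
    have "red y \<noteq> red y'"
    proof
      assume "red y = red y'"
      hence "red y i = red y' i" by simp
      hence "y i mod P = y' i mod P" using id by (simp add: red_def)
      hence "P dvd (y i - y' i)" by (simp add: mod_eq_dvd_iff)
      moreover have "y i - y' i \<noteq> 0" using i by simp
      ultimately have "P \<le> \<bar>y i - y' i\<bar>" using dvd_imp_le_int[of "y i - y' i" P] P0 by simp
      with bnd[OF id] show False by (simp add: P_def)
    qed
    moreover define w where "w = restrict (\<lambda>i. y' i - y i) {..<d}"
    have "w \<in> Wset d D" using s bnd
      by (auto simp: Wset_def w_def abs_minus_commute abs_le_iff) (smt (verit) bnd)
    moreover have "red (\<lambda>i. red y i + w i) = red y'"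
      by (auto simp: red_def w_def mod_add_left_eq)
    ultimately have "E (red y) (red y')" using redT by (auto simp: E_def)
    thus ?thesis using f redT by (auto simp: col_def)
  qed
  ultimately show ?thesis by blast
qed


definition rnd :: "real \<Rightarrow> int pmf" where
  "rnd r = map_pmf (\<lambda>b. \<lfloor>r\<rfloor> + (if b then 1 else 0)) (bernoulli_pmf (frac r))"

lemma rnd_set: "z \<in> set_pmf (rnd r) \<Longrightarrow> \<bar>real_of_int z - r\<bar> \<le> 1"
  using frac_lt_1[of r] frac_ge_0[of r]
  by (auto simp: rnd_def frac_def split: if_splits)

lemma rnd_exp: "measure_pmf.expectation (rnd r) (\<lambda>z. h * real_of_int z) = h * r"
proof -
  have "measure_pmf.expectation (rnd r) (\<lambda>z. h * real_of_int z)
     = (h * (real_of_int \<lfloor>r\<rfloor> + 1)) * frac r + (h * real_of_int \<lfloor>r\<rfloor>) * (1 - frac r)"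
    unfolding rnd_def using frac_lt_1[of r] by (simp add: algebra_simps)
  also have "\<dots> = h * r" by (simp add: frac_def algebra_simps)
  finally show ?thesis .
qed

lemma ln2_ge: "ln (2::real) \<ge> 1/2"
proof -
  have "exp (1/2::real) ^ 2 = exp 1" by (simp add: exp_of_nat_mult[symmetric])
  also have "\<dots> \<le> 2 ^ 2" using exp_le by simp
  finally have "exp (1/2::real) \<le> 2" by (rule power2_le_imp_le) simp
  thus ?thesis by (subst ln_ge_iff) auto
qed

lemma bits_choice:
  fixes c q :: real and \<alpha> :: nat
  assumes c: "c > 0" and q3: "q \<ge> 3" and qc: "q \<ge> 12 * c + 24"
    and a: "\<alpha> = nat \<lceil>2 * (c * q + 1)\<rceil>"
  shows "\<exists>k::nat. 2 * exp 1 * (real \<alpha> + 1) \<le> 2 ^ k \<and> real k + 1 \<le> 6 * ln q"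
proof -
  define G where "G = 2 * exp 1 * (real \<alpha> + 1)"
  have G1: "G \<ge> 1" unfolding G_def using exp_ge_add_one_self[of 1] by (simp add: mult_ge1_I)
  have x0: "0 \<le> 2 * (c * q + 1)" using c q3 by simp
  have "real \<alpha> = of_int \<lceil>2 * (c * q + 1)\<rceil>" unfolding a
    by (rule of_nat_nat) (use x0 ceiling_correct[of "2 * (c * q + 1)"] in linarith)
  hence "real \<alpha> \<le> 2 * (c * q + 1) + 1" using ceiling_correct[of "2 * (c * q + 1)"] by linarith
  hence "G \<le> 2 * 3 * (2 * (c * q + 1) + 2)" unfolding G_def
    using exp_le by (intro mult_mono) auto
  also have "\<dots> = 12 * c * q + 24" by (simp add: algebra_simps)
  also have "\<dots> \<le> (12 * c + 24) * q" using q3 c by (simp add: algebra_simps)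
  also have "\<dots> \<le> q * q" using qc q3 by (intro mult_right_mono) auto
  finally have Gq: "G \<le> q * q" .
  define lg where "lg = log 2 G"
  define k where "k = nat \<lceil>lg\<rceil>"
  have lg0: "lg \<ge> 0" unfolding lg_def using G1 by simp
  have "G = 2 powr lg" unfolding lg_def using G1 by simp
  also have "\<dots> \<le> 2 powr (real k)" unfolding k_def by (intro powr_mono) linarith+
  also have "\<dots> = 2 ^ k" by (simp add: powr_realpow)
  finally have Gk: "G \<le> 2 ^ k" .
  have "ln G \<le> ln (q * q)" using G1 Gq by simp
  also have "\<dots> = 2 * ln q" using q3 by (simp add: ln_mult)
  finally have lnG: "ln G \<le> 2 * ln q" .
  have lnG0: "ln G \<ge> 0" using G1 by simp
  have "lg = ln G / ln 2" unfolding lg_def by (simp add: log_def)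
  also have "\<dots> \<le> ln G / (1/2)" using ln2_ge lnG0 by (intro divide_left_mono) auto
  also have "\<dots> \<le> 4 * ln q" using lnG by simp
  finally have "lg \<le> 4 * ln q" .
  moreover have "real k \<le> lg + 1" unfolding k_def using lg0 by linarith
  moreover have "ln q \<ge> 1" using q3 exp_le by (subst ln_ge_iff) auto
  ultimately have "real k + 1 \<le> 6 * ln q" by linarith
  with Gk show ?thesis unfolding G_def by blast
qed


lemma vnorm_zero_dim: "vnorm nk 0 x = 0"
  by (cases nk) auto

lemma main_pos:
  fixes nk :: normkind and c q \<epsilon> :: real and d :: nat
  assumes c: "c > 0" and q3: "q \<ge> 3" and qc: "q \<ge> 12 * c + 24" and e: "\<epsilon> > 0" and d: "d > 0"
  shows "\<exists>(Enc :: (nat \<Rightarrow> real) \<Rightarrow> bool list pmf)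
         (Dec :: bool list \<Rightarrow> (nat \<Rightarrow> real) \<Rightarrow> (nat \<Rightarrow> real)).
         (\<forall>xu \<in> vecs d. \<forall>m \<in> set_pmf (Enc xu).
              real (length m) \<le> 6 * real d * ln q) \<and>
         (\<forall>xu \<in> vecs d. \<forall>xv \<in> vecs d.
              vnorm nk d (xu - xv) \<le> c * q * \<epsilon> \<longrightarrow>
              (\<forall>m \<in> set_pmf (Enc xu). vnorm nk d (Dec m xv - xu) \<le> 1 * \<epsilon>) \<and>
              (\<forall>i<d. measure_pmf.expectation (Enc xu) (\<lambda>m. Dec m xv i) = xu i))"
proof -
  define h where "h = \<epsilon> / sc nk d"
  have scp: "sc nk d > 0" using sc_pos[OF d] .
  have h0: "h > 0" unfolding h_def using scp e by simp
  define \<alpha> where "\<alpha> = nat \<lceil>2 * (c * q + 1)\<rceil>"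
  have x0: "0 \<le> 2 * (c * q + 1)" using c q3 by simp
  have "real \<alpha> = of_int \<lceil>2 * (c * q + 1)\<rceil>" unfolding \<alpha>_def
    by (rule of_nat_nat) (use x0 ceiling_correct[of "2 * (c * q + 1)"] in linarith)
  hence a2: "real \<alpha> \<ge> 2 * (c * q + 1)" by (simp add: ceiling_correct)
  hence a1: "\<alpha> \<ge> 1" using c q3
    by (smt (verit, best) mult_pos_pos of_nat_0_less_iff of_nat_1 of_nat_le_iff zero_less_iff_neq_zero)
  define D where "D = \<alpha> * d"
  define R where "R = (c * q + 1) * real d"
  have "2 * R = (2 * (c * q + 1)) * real d" unfolding R_def by simp
  also have "\<dots> \<le> real \<alpha> * real d" using a2 by (rule mult_right_mono) simp
  finally have RD: "2 * R \<le> real D" unfolding D_def by simp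
  obtain k :: nat where k1: "2 * exp 1 * (real \<alpha> + 1) \<le> 2 ^ k" and k2: "real k + 1 \<le> 6 * ln q"
    using bits_choice[OF c q3 qc \<alpha>_def] by blast
  define b where "b = d * k + 1"
  define C where "C = {xs :: bool list. set xs \<subseteq> UNIV \<and> length xs = b}"
  have finC: "finite C" unfolding C_def by (rule finite_lists_length_eq) simp
  have cardC: "card C = 2 ^ b" unfolding C_def by (subst card_lists_length_eq) (simp_all add: card_UNIV_bool)
  have "real (card (Wset d D)) \<le> (2 * exp 1 * (real \<alpha> + 1)) ^ d"
    unfolding D_def by (rule card_Wset[OF a1])
  also have "\<dots> \<le> (2 ^ k) ^ d" by (rule power_mono[OF k1]) (simp add: add_nonneg_nonneg)
  also have "\<dots> < 2 ^ b" by (simp add: b_def power_mult[symmetric] mult.commute)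
  finally have "real (card (Wset d D)) < real (card C)" by (simp add: cardC)
  hence cW: "card (Wset d D) < card C" by (simp only: of_nat_less_iff)
  obtain col :: "(nat \<Rightarrow> int) \<Rightarrow> bool list" where colC: "\<forall>y. col y \<in> C"
    and colI: "\<forall>y y'. (\<forall>i\<ge>d. y i = 0) \<longrightarrow> (\<forall>i\<ge>d. y' i = 0) \<longrightarrow> y \<noteq> y' \<longrightarrow>
        (\<Sum>i<d. \<bar>y i - y' i\<bar>) \<le> int D \<longrightarrow> col y \<noteq> col y'"
    using lattice_color[OF finC cW] by (elim exE conjE) simp
  define Y where "Y xu = Pi_pmf {..<d} (0::int) (\<lambda>i. rnd (xu i / h))" for xu :: "nat \<Rightarrow> real"
  define Enc where "Enc xu = map_pmf col (Y xu)" for xu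
  define vec where "vec y = (\<lambda>i. h * real_of_int (y i))" for y :: "nat \<Rightarrow> int"
  define cl where "cl xv y = ((\<forall>i\<ge>d. y i = 0) \<and> (\<Sum>i<d. \<bar>real_of_int (y i) - xv i / h\<bar>) \<le> R)"
    for xv :: "nat \<Rightarrow> real" and y
  define Dec where "Dec m xv = (if \<exists>y. cl xv y \<and> col y = m then vec (SOME y. cl xv y \<and> col y = m) else (\<lambda>_. 0))"
    for m xv
  have setY: "set_pmf (Y xu) = PiE_dflt {..<d} 0 (set_pmf \<circ> (\<lambda>i. rnd (xu i / h)))" for xu
    unfolding Y_def by (rule set_Pi_pmf) simp
  have ysupp: "(\<forall>i\<ge>d. y i = 0) \<and> (\<forall>i<d. \<bar>real_of_int (y i) - xu i / h\<bar> \<le> 1)"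
    if "y \<in> set_pmf (Y xu)" for y xu
    using that rnd_set unfolding setY by (auto simp: PiE_dflt_def)
  have dec_ok: "Dec (col y) xv = vec y"
    if xu: "xu \<in> vecs d" and xv: "xv \<in> vecs d" and close: "vnorm nk d (xu - xv) \<le> c * q * \<epsilon>"
      and y: "y \<in> set_pmf (Y xu)" for xu xv y
  proof -
    note ys = ysupp[OF y]
    have "(\<Sum>i<d. \<bar>real_of_int (y i) - xv i / h\<bar>)
        \<le> (\<Sum>i<d. \<bar>real_of_int (y i) - xu i / h\<bar> + \<bar>(xu - xv) i\<bar> / h)"
    proof (rule sum_mono)
      fix i
      have "real_of_int (y i) - xv i / h = (real_of_int (y i) - xu i / h) + (xu i - xv i) / h"
        using h0 by (simp add: field_simps)
      hence "\<bar>real_of_int (y i) - xv i / h\<bar> = \<bar>(real_of_int (y i) - xu i / h) + (xu i - xv i) / h\<bar>"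
        by simp
      also have "\<dots> \<le> \<bar>real_of_int (y i) - xu i / h\<bar> + \<bar>(xu i - xv i) / h\<bar>"
        by (rule abs_triangle_ineq)
      also have "\<bar>(xu i - xv i) / h\<bar> = \<bar>(xu - xv) i\<bar> / h" using h0 by simp
      finally show "\<bar>real_of_int (y i) - xv i / h\<bar> \<le> \<bar>real_of_int (y i) - xu i / h\<bar> + \<bar>(xu - xv) i\<bar> / h" .
    qed
    also have "\<dots> = (\<Sum>i<d. \<bar>real_of_int (y i) - xu i / h\<bar>) + (\<Sum>i<d. \<bar>(xu - xv) i\<bar>) / h"
      by (simp add: sum.distrib sum_divide_distrib)
    also have "\<dots> \<le> real d + (sa nk d * vnorm nk d (xu - xv)) / h"
    proof (rule add_mono)
      show "(\<Sum>i<d. \<bar>real_of_int (y i) - xu i / h\<bar>) \<le> real d"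
        using sum_mono[of "{..<d}" "\<lambda>i. \<bar>real_of_int (y i) - xu i / h\<bar>" "\<lambda>_. 1"] ys by simp
      show "(\<Sum>i<d. \<bar>(xu - xv) i\<bar>) / h \<le> sa nk d * vnorm nk d (xu - xv) / h"
        using h0 norm_L1_bound[of "xu - xv" d nk] by (intro divide_right_mono) auto
    qed
    also have "\<dots> \<le> real d + (sa nk d * (c * q * \<epsilon>)) / h"
    proof -
      have "sa nk d \<ge> 0" by (cases nk) auto
      thus ?thesis using close h0 by (simp add: divide_right_mono mult_left_mono)
    qed
    also have "(sa nk d * (c * q * \<epsilon>)) / h = (sa nk d * sc nk d) * c * q"
      unfolding h_def using scp e by (simp add: field_simps)
    also have "real d + \<dots> = R" unfolding R_def sa_sc by (simp add: algebra_simps)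
    finally have cly: "cl xv y" unfolding cl_def using ys by simp
    have uniq: "y' = y" if "cl xv y'" "col y' = col y" for y'
    proof (rule ccontr)
      assume ne: "y' \<noteq> y"
      have "(\<Sum>i<d. \<bar>real_of_int (y' i) - real_of_int (y i)\<bar>)
          \<le> (\<Sum>i<d. \<bar>real_of_int (y' i) - xv i / h\<bar> + \<bar>real_of_int (y i) - xv i / h\<bar>)"
        by (rule sum_mono) linarith
      also have "\<dots> \<le> R + R" using that(1) cly unfolding cl_def by (simp add: sum.distrib)
      also have "\<dots> \<le> real D" using RD by simp
      finally have "real_of_int (\<Sum>i<d. \<bar>y' i - y i\<bar>) \<le> real_of_int (int D)" by simp
      hence "(\<Sum>i<d. \<bar>y' i - y i\<bar>) \<le> int D" by linarith
      with colI ne that cly show False unfolding cl_def by blast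
    qed
    have ex: "\<exists>y'. cl xv y' \<and> col y' = col y" using cly by blast
    have "(SOME y'. cl xv y' \<and> col y' = col y) = y"
      using someI_ex[OF ex] uniq by blast
    thus ?thesis unfolding Dec_def using ex by simp
  qed
  have P1: "\<forall>xu \<in> vecs d. \<forall>m \<in> set_pmf (Enc xu). real (length m) \<le> 6 * real d * ln q"
  proof (intro ballI)
    fix xu m assume "m \<in> set_pmf (Enc xu)"
    then have "length m = b" using colC by (auto simp: Enc_def C_def)
    hence "real (length m) = real d * real k + 1" by (simp add: b_def)
    also have "\<dots> \<le> real d * (real k + 1)" using d by (simp add: algebra_simps)
    also have "\<dots> \<le> real d * (6 * ln q)" using k2 by (intro mult_left_mono) auto
    finally show "real (length m) \<le> 6 * real d * ln q" by simp
  qed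
  have P2: "(\<forall>m \<in> set_pmf (Enc xu). vnorm nk d (Dec m xv - xu) \<le> 1 * \<epsilon>) \<and>
              (\<forall>i<d. measure_pmf.expectation (Enc xu) (\<lambda>m. Dec m xv i) = xu i)"
    if xu: "xu \<in> vecs d" and xv: "xv \<in> vecs d" and close: "vnorm nk d (xu - xv) \<le> c * q * \<epsilon>" for xu xv
  proof
    show "\<forall>m \<in> set_pmf (Enc xu). vnorm nk d (Dec m xv - xu) \<le> 1 * \<epsilon>"
    proof
      fix m assume "m \<in> set_pmf (Enc xu)"
      then obtain y where y: "y \<in> set_pmf (Y xu)" and m: "m = col y" by (auto simp: Enc_def)
      have "vnorm nk d (Dec m xv - xu) = vnorm nk d (vec y - xu)"
        using dec_ok[OF xu xv close y] m by simp
      also have "\<dots> \<le> sc nk d * h"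
      proof (rule norm_small)
        show "0 \<le> h" using h0 by simp
        fix i assume i: "i < d"
        have "(vec y - xu) i = h * (real_of_int (y i) - xu i / h)"
          using h0 by (simp add: vec_def field_simps)
        also have "\<bar>\<dots>\<bar> \<le> h * 1"
          using ysupp[OF y] i h0 by (simp add: abs_mult)
        finally show "\<bar>(vec y - xu) i\<bar> \<le> h" by simp
      qed
      also have "\<dots> = 1 * \<epsilon>" unfolding h_def using scp by simp
      finally show "vnorm nk d (Dec m xv - xu) \<le> 1 * \<epsilon>" .
    qed
    show "\<forall>i<d. measure_pmf.expectation (Enc xu) (\<lambda>m. Dec m xv i) = xu i"
    proof (intro allI impI)
      fix i assume i: "i < d"
      have "map_pmf (\<lambda>m. Dec m xv i) (Enc xu) = map_pmf (\<lambda>y. h * real_of_int (y i)) (Y xu)"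
        unfolding Enc_def map_pmf_comp
        by (rule map_pmf_cong) (auto simp: dec_ok[OF xu xv close] vec_def)
      also have "\<dots> = map_pmf (\<lambda>z. h * real_of_int z) (map_pmf (\<lambda>y. y i) (Y xu))"
        by (simp add: map_pmf_comp)
      also have "map_pmf (\<lambda>y. y i) (Y xu) = rnd (xu i / h)"
        unfolding Y_def using i by (subst Pi_pmf_component) auto
      finally have eq: "map_pmf (\<lambda>m. Dec m xv i) (Enc xu) = map_pmf (\<lambda>z. h * real_of_int z) (rnd (xu i / h))" .
      have "measure_pmf.expectation (Enc xu) (\<lambda>m. Dec m xv i)
          = measure_pmf.expectation (map_pmf (\<lambda>m. Dec m xv i) (Enc xu)) (\<lambda>x. x)" by simp
      also have "\<dots> = measure_pmf.expectation (rnd (xu i / h)) (\<lambda>z. h * real_of_int z)"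
        unfolding eq by simp
      also have "\<dots> = h * (xu i / h)" by (rule rnd_exp)
      also have "\<dots> = xu i" using h0 by simp
      finally show "measure_pmf.expectation (Enc xu) (\<lambda>m. Dec m xv i) = xu i" .
    qed
  qed
  show ?thesis
    by (rule exI[of _ Enc], rule exI[of _ Dec]) (use P1 P2 in blast)
qed

theorem theorem1:
  fixes nk :: normkind and c :: real
  assumes "c > 0"
  shows "\<exists>q0 Cbits Cerr :: real. q0 > 1 \<and> Cbits > 0 \<and> Cerr > 0 \<and>
    (\<forall>(d::nat) (q::real) (\<epsilon>::real). q \<ge> q0 \<longrightarrow> \<epsilon> > 0 \<longrightarrow>
      (\<exists>(Enc :: (nat \<Rightarrow> real) \<Rightarrow> bool list pmf)
         (Dec :: bool list \<Rightarrow> (nat \<Rightarrow> real) \<Rightarrow> (nat \<Rightarrow> real)).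
         (\<forall>xu \<in> vecs d. \<forall>m \<in> set_pmf (Enc xu).
              real (length m) \<le> Cbits * real d * ln q) \<and>
         (\<forall>xu \<in> vecs d. \<forall>xv \<in> vecs d.
              vnorm nk d (xu - xv) \<le> c * q * \<epsilon> \<longrightarrow>
              (\<forall>m \<in> set_pmf (Enc xu). vnorm nk d (Dec m xv - xu) \<le> Cerr * \<epsilon>) \<and>
              (\<forall>i<d. measure_pmf.expectation (Enc xu) (\<lambda>m. Dec m xv i) = xu i))))"
proof -
  define q0 :: real where "q0 = max 3 (12 * c + 24)"
  have q01: "q0 > 1" unfolding q0_def by simp
  have key: "\<exists>(Enc :: (nat \<Rightarrow> real) \<Rightarrow> bool list pmf)
         (Dec :: bool list \<Rightarrow> (nat \<Rightarrow> real) \<Rightarrow> (nat \<Rightarrow> real)).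
         (\<forall>xu \<in> vecs d. \<forall>m \<in> set_pmf (Enc xu).
              real (length m) \<le> 6 * real d * ln q) \<and>
         (\<forall>xu \<in> vecs d. \<forall>xv \<in> vecs d.
              vnorm nk d (xu - xv) \<le> c * q * \<epsilon> \<longrightarrow>
              (\<forall>m \<in> set_pmf (Enc xu). vnorm nk d (Dec m xv - xu) \<le> 1 * \<epsilon>) \<and>
              (\<forall>i<d. measure_pmf.expectation (Enc xu) (\<lambda>m. Dec m xv i) = xu i))"
    if q: "q \<ge> q0" and e: "\<epsilon> > 0" for d :: nat and q \<epsilon> :: real
  proof (cases "d = 0")
    case True
    show ?thesis
      by (rule exI[of _ "\<lambda>_. return_pmf []"], rule exI[of _ "\<lambda>_ _ _. 0"])
         (use True e in \<open>simp add: vnorm_zero_dim\<close>)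
  next
    case False
    have q3: "q \<ge> 3" and qc: "q \<ge> 12 * c + 24" using q unfolding q0_def by auto
    show ?thesis by (rule main_pos[OF assms q3 qc e]) (use False in simp)
  qed
  show ?thesis
    apply (rule exI[of _ q0], rule exI[of _ "6"], rule exI[of _ "1"])
    apply (intro conjI allI impI)
    using q01 apply simp
      apply simp
     apply simp
    by (rule key)
qed

end
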